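(* Let $\lambda>0$, $b>0$, $1<q<p$ and $\lambda_1<a<\lambda^*$. Then there exist $\alpha>0$ and $\rho>0$ such that $I_{\lambda,s}(u)\ge\alpha$ for every $u\in W$ with $\|u\|_{X_p^s}=\rho$.
   Context: $\Omega\subset\mathbb{R}^N$ bounded smooth domain, $s\in(0,1)$, $p>1$, $N>sp$, $p_s^*=\frac{Np}{N-sp}$. $X_p^s=\{u\in W^{s,p}(\mathbb{R}^N): u=0 \text{ a.e. in } \mathbb{R}^N\setminus\Omega\}$ with norm $\|u\|_{X_p^s}=\big(\int_{\mathbb{R}^{2N}}\frac{|u(x)-u(y)|^p}{|x-y|^{N+sp}}dxdy\big)^{1/p}$. $A(u)\cdot v=\int_{\mathbb{R}^{2N}}\frac{|u(x)-u(y)|^{p-2}(u(x)-u(y))(v(x)-v(y))}{|x-y|^{N+sp}}dxdy$. $\lambda_1$ is the first eigenvalue of the fractional $p$-Laplacian on $X_p^s$ and $\varphi_1$ its positive $L^p$-normalized eigenfunction. $W=\{u\in X_p^s: A(\varphi_1)\cdot u=0\}$, $\lambda^*=\inf\{\|u\|_{X_p^s}^p:u\in W,\|u\|^p_{L^p(\Omega)}=1\}$. $I_{\lambda,s}(u)=\frac1p\|u\|_{X_p^s}^p+\frac\lambda q\int_\Omega|u|^q-\frac ap\int_\Omega|u|^p-\frac{b}{p_s^*}\int_\Omega(u^+)^{p_s^*}$, $u^+=\max\{u,0\}$. *)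

theory Defs
  imports "HOL-Analysis.Analysis"
begin

definition smooth_on :: "'a set \<Rightarrow> ('a::euclidean_space \<Rightarrow> real) \<Rightarrow> bool" where
  "smooth_on U g \<longleftrightarrow> (\<exists>F. g \<in> F \<and> (\<forall>f\<in>F. continuous_on U f \<and> f differentiable_on U \<and>
      (\<forall>i\<in>Basis. (\<lambda>x. frechet_derivative f (at x) i) \<in> F)))"

definition smooth_bounded_domain :: "'a::euclidean_space set \<Rightarrow> bool" where
  "smooth_bounded_domain \<Omega> \<longleftrightarrow> open \<Omega> \<and> bounded \<Omega> \<and> connected \<Omega> \<and> \<Omega> \<noteq> {} \<and>
     (\<exists>U g. open U \<and> frontier \<Omega> \<subseteq> U \<and> smooth_on U g \<and> (\<forall>x\<in>U. x \<in> \<Omega> \<longleftrightarrow> g x < 0) \<and>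
        (\<forall>x\<in>frontier \<Omega>. frechet_derivative g (at x) \<noteq> (\<lambda>_. 0)))"

text \<open>Gagliardo seminorm to the power p (N = DIM('a)).\<close>
definition gagliardo :: "real \<Rightarrow> real \<Rightarrow> ('a::euclidean_space \<Rightarrow> real) \<Rightarrow> ennreal" where
  "gagliardo p s u = (\<integral>\<^sup>+ z. ennreal (\<bar>u (fst z) - u (snd z)\<bar> powr p /
        norm (fst z - snd z) powr (real DIM('a) + s * p)) \<partial>(lborel \<Otimes>\<^sub>M lborel))"

definition Xps :: "'a::euclidean_space set \<Rightarrow> real \<Rightarrow> real \<Rightarrow> ('a \<Rightarrow> real) set" where
  "Xps \<Omega> p s = {u. u \<in> borel_measurable lborel \<and> integrable lborel (\<lambda>x. \<bar>u x\<bar> powr p) \<and>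
       gagliardo p s u < \<infinity> \<and> (AE x in lborel. x \<notin> \<Omega> \<longrightarrow> u x = 0)}"

definition Xnorm :: "real \<Rightarrow> real \<Rightarrow> ('a::euclidean_space \<Rightarrow> real) \<Rightarrow> real" where
  "Xnorm p s u = enn2real (gagliardo p s u) powr (1 / p)"

definition Aop :: "real \<Rightarrow> real \<Rightarrow> ('a::euclidean_space \<Rightarrow> real) \<Rightarrow> ('a \<Rightarrow> real) \<Rightarrow> real" where
  "Aop p s u v = (\<integral> z. \<bar>u (fst z) - u (snd z)\<bar> powr (p - 2) * (u (fst z) - u (snd z)) *
        (v (fst z) - v (snd z)) / norm (fst z - snd z) powr (real DIM('a) + s * p)
        \<partial>(lborel \<Otimes>\<^sub>M lborel))"

definition Lpp :: "'a::euclidean_space set \<Rightarrow> real \<Rightarrow> ('a \<Rightarrow> real) \<Rightarrow> real" where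
  "Lpp \<Omega> p u = (LINT x:\<Omega>|lborel. \<bar>u x\<bar> powr p)"

definition lambda1 :: "'a::euclidean_space set \<Rightarrow> real \<Rightarrow> real \<Rightarrow> real" where
  "lambda1 \<Omega> p s = Inf {Xnorm p s u powr p | u. u \<in> Xps \<Omega> p s \<and> Lpp \<Omega> p u = 1}"

definition first_eigenfunction :: "'a::euclidean_space set \<Rightarrow> real \<Rightarrow> real \<Rightarrow> ('a \<Rightarrow> real) \<Rightarrow> bool" where
  "first_eigenfunction \<Omega> p s \<phi> \<longleftrightarrow> \<phi> \<in> Xps \<Omega> p s \<and> Lpp \<Omega> p \<phi> = 1 \<and>
     (AE x in lborel. x \<in> \<Omega> \<longrightarrow> \<phi> x > 0) \<and>
     (\<forall>v\<in>Xps \<Omega> p s. Aop p s \<phi> v = lambda1 \<Omega> p s * (LINT x:\<Omega>|lborel. \<bar>\<phi> x\<bar> powr (p - 2) * \<phi> x * v x))"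

definition Wsp :: "'a::euclidean_space set \<Rightarrow> real \<Rightarrow> real \<Rightarrow> ('a \<Rightarrow> real) \<Rightarrow> ('a \<Rightarrow> real) set" where
  "Wsp \<Omega> p s \<phi> = {u \<in> Xps \<Omega> p s. Aop p s \<phi> u = 0}"

definition lambda_star :: "'a::euclidean_space set \<Rightarrow> real \<Rightarrow> real \<Rightarrow> ('a \<Rightarrow> real) \<Rightarrow> real" where
  "lambda_star \<Omega> p s \<phi> = Inf {Xnorm p s u powr p | u. u \<in> Wsp \<Omega> p s \<phi> \<and> Lpp \<Omega> p u = 1}"

definition crit_exp :: "'a::euclidean_space itself \<Rightarrow> real \<Rightarrow> real \<Rightarrow> real" where
  "crit_exp _ p s = real DIM('a) * p / (real DIM('a) - s * p)"

definition Ifun :: "'a::euclidean_space set \<Rightarrow> real \<Rightarrow> real \<Rightarrow> real \<Rightarrow> real \<Rightarrow> real \<Rightarrow> real \<Rightarrow> ('a \<Rightarrow> real) \<Rightarrow> real" where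
  "Ifun \<Omega> p s q lam a b u =
     Xnorm p s u powr p / p + lam / q * (LINT x:\<Omega>|lborel. \<bar>u x\<bar> powr q)
     - a / p * (LINT x:\<Omega>|lborel. \<bar>u x\<bar> powr p)
     - b / crit_exp TYPE('a) p s * (LINT x:\<Omega>|lborel. max (u x) 0 powr crit_exp TYPE('a) p s)"

end

theory Submission
  imports Defs
begin


lemma young_step:
  fixes x y \<theta> :: real
  assumes "0 \<le> x" "x \<le> y" "0 < \<theta>" "\<theta> < 1"
  shows "y powr (1-\<theta>) \<le> x * y powr (-\<theta>) + (y powr (1-\<theta>) - x powr (1-\<theta>)) / (1-\<theta>)"
proof (cases "y = 0")
  case True then show ?thesis using assms by simp
next
  case False
  then have y: "y > 0" using assms by simp
  have Y: "x powr (1-\<theta>) * y powr \<theta> \<le> (1-\<theta>) * x + \<theta> * y"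
  proof (cases "x = 0")
    case True then show ?thesis using assms y by simp
  next
    case False
    then show ?thesis using Youngs_inequality_0[of "1-\<theta>" \<theta> x y] assms y by simp
  qed
  have e1: "y powr (1-\<theta>) * y powr \<theta> = y" using y by (simp flip: powr_add)
  have e2: "y powr (-\<theta>) * y powr \<theta> = 1" using y by (simp flip: powr_add)
  have "x powr (1-\<theta>) \<le> \<theta> * y powr (1-\<theta>) + (1-\<theta>) * x * y powr (-\<theta>)"
  proof -
    have p: "y powr \<theta> > 0" using y by simp
    have "(\<theta> * y powr (1-\<theta>) + (1-\<theta>) * x * y powr (-\<theta>)) * y powr \<theta> = \<theta> * y + (1-\<theta>) * x"
      using e1 e2 by (simp add: algebra_simps)
    with Y p show ?thesis
      by (metis add.commute mult_le_cancel_right_pos)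
  qed
  then show ?thesis using assms by (simp add: field_simps)
qed

lemma telescope_u:
  fixes b :: "nat \<Rightarrow> real" and u :: real
  assumes "b 0 = 0"
  shows "(\<Sum>n<N. u^n * (b (Suc n) - b n)) = (1-u) * (\<Sum>n<N. u^n * b (Suc n)) + u^N * b N"
  using assms by (induction N) (simp_all add: algebra_simps)



lemma mono_nonneg:
  fixes a :: "nat \<Rightarrow> real"
  assumes "a 0 = 0" "\<And>n. a n \<le> a (Suc n)"
  shows "0 \<le> a n"
  using assms by (induction n) (auto intro: order_trans)

lemma mono_le:
  fixes a :: "nat \<Rightarrow> real"
  assumes "\<And>n. a n \<le> a (Suc n)" "m \<le> n"
  shows "a m \<le> a n"
  using assms(2) by (induction n) (auto intro: order_trans assms(1) simp: le_Suc_eq)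

lemma aN_bound:
  fixes a :: "nat \<Rightarrow> real"
  assumes a0: "a 0 = 0" and mono: "\<And>n. a n \<le> a (Suc n)" and th: "0 < \<theta>"
  shows "a N * a (Suc N) powr (-\<theta>) \<le> (\<Sum>j<N. (a (Suc j) - a j) * a (Suc (Suc j)) powr (-\<theta>))"
proof -
  have "a N = (\<Sum>j<N. (a (Suc j) - a j))"
    using a0 by (simp add: sum_lessThan_telescope)
  then have "a N * a (Suc N) powr (-\<theta>) = (\<Sum>j<N. (a (Suc j) - a j) * a (Suc N) powr (-\<theta>))"
    by (simp add: sum_distrib_right)
  also have "\<dots> \<le> (\<Sum>j<N. (a (Suc j) - a j) * a (Suc (Suc j)) powr (-\<theta>))"
  proof (rule sum_mono)
    fix j assume j: "j \<in> {..<N}"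
    have d: "0 \<le> a (Suc j) - a j" using mono[of j] by simp
    show "(a (Suc j) - a j) * a (Suc N) powr (-\<theta>) \<le> (a (Suc j) - a j) * a (Suc (Suc j)) powr (-\<theta>)"
    proof (cases "a (Suc j) - a j = 0")
      case True then show ?thesis by simp
    next
      case False
      then have "0 < a (Suc j) - a j" using d by simp
      moreover have "a j \<ge> 0" using mono_nonneg[of a j] a0 mono by simp
      ultimately have pos: "0 < a (Suc (Suc j))" using mono[of "Suc j"] by simp
      have "a (Suc (Suc j)) \<le> a (Suc N)" using mono_le[of a "Suc (Suc j)" "Suc N"] mono j by simp
      then have "a (Suc N) powr (-\<theta>) \<le> a (Suc (Suc j)) powr (-\<theta>)"
        using powr_mono2'[of "-\<theta>" "a (Suc (Suc j))" "a (Suc N)"] pos th by simp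
      then show ?thesis using d by (simp add: mult_left_mono)
    qed
  qed
  finally show ?thesis .
qed

lemma Q_bound:
  fixes a :: "nat \<Rightarrow> real"
  assumes a0: "a 0 = 0" and mono: "\<And>n. a n \<le> a (Suc n)" and th: "0 < \<theta>" and u: "0 < u" "u < 1"
  shows "(\<Sum>n<N. u^n * (a n * a (Suc n) powr (-\<theta>))) \<le>
    (\<Sum>j<N. (a (Suc j) - a j) * a (Suc (Suc j)) powr (-\<theta>) * (u^(Suc j) - u^N)) / (1-u)"
proof (induction N)
  case 0 then show ?case by simp
next
  case (Suc N)
  define r where "r j = (a (Suc j) - a j) * a (Suc (Suc j)) powr (-\<theta>)" for j
  have IH: "(\<Sum>n<N. u^n * (a n * a (Suc n) powr (-\<theta>))) \<le> (\<Sum>j<N. r j * (u^(Suc j) - u^N)) / (1-u)"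
    using Suc.IH by (simp add: r_def)
  have st: "a N * a (Suc N) powr (-\<theta>) \<le> (\<Sum>j<N. r j)"
    using aN_bound[OF a0 mono th, of N] by (simp add: r_def)
  have eq: "(\<Sum>j<Suc N. r j * (u^(Suc j) - u^(Suc N))) = (\<Sum>j<N. r j * (u^(Suc j) - u^N)) + (u^N - u^(Suc N)) * (\<Sum>j<N. r j)"
    by (simp add: sum_distrib_left sum.distrib[symmetric] algebra_simps)
  have "(\<Sum>n<Suc N. u^n * (a n * a (Suc n) powr (-\<theta>))) = (\<Sum>n<N. u^n * (a n * a (Suc n) powr (-\<theta>))) + u^N * (a N * a (Suc N) powr (-\<theta>))"
    by simp
  also have "\<dots> \<le> (\<Sum>j<N. r j * (u^(Suc j) - u^N)) / (1-u) + u^N * (\<Sum>j<N. r j)"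
    using IH st u by (intro add_mono mult_left_mono) auto
  also have "\<dots> = (\<Sum>j<Suc N. r j * (u^(Suc j) - u^(Suc N))) / (1-u)"
    using u unfolding eq by (simp add: field_simps)
  finally show ?case by (simp add: r_def)
qed



lemma levels_real:
  fixes a :: "nat \<Rightarrow> real"
  assumes a0: "a 0 = 0" and mono: "\<And>n. a n \<le> a (Suc n)" and th: "0 < \<theta>" "\<theta> < 1"
    and u: "0 < u" "u < 1"
  shows "(1 - (1-u)/(1-\<theta>)) * (\<Sum>n<N. u^n * a (Suc n) powr (1-\<theta>)) \<le>
     u/(1-u) * (\<Sum>n<N. u^n * ((a (Suc n) - a n) * a (Suc (Suc n)) powr (-\<theta>))) + u^N * a N powr (1-\<theta>) / (1-\<theta>)"
proof -
  define S where "S = (\<Sum>n<N. u^n * a (Suc n) powr (1-\<theta>))"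
  define Q where "Q = (\<Sum>n<N. u^n * (a n * a (Suc n) powr (-\<theta>)))"
  define R where "R = (\<Sum>n<N. u^n * ((a (Suc n) - a n) * a (Suc (Suc n)) powr (-\<theta>)))"
  define b where "b n = a n powr (1-\<theta>)" for n
  have nn: "0 \<le> a n" for n using mono_nonneg[of a n] a0 mono by simp
  have b0: "b 0 = 0" using a0 by (simp add: b_def)
  have "S \<le> (\<Sum>n<N. u^n * (a n * a (Suc n) powr (-\<theta>) + (b (Suc n) - b n) / (1-\<theta>)))"
    unfolding S_def b_def
    by (intro sum_mono mult_left_mono young_step) (use nn mono th u in auto)
  also have "\<dots> = Q + (\<Sum>n<N. u^n * (b (Suc n) - b n)) / (1-\<theta>)"
    by (simp add: Q_def algebra_simps sum.distrib sum_divide_distrib)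
  also have "(\<Sum>n<N. u^n * (b (Suc n) - b n)) = (1-u) * S + u^N * b N"
    using telescope_u[of b u N] b0 by (simp add: S_def b_def)
  finally have 1: "S \<le> Q + ((1-u) * S + u^N * b N) / (1-\<theta>)" .
  have 2: "Q \<le> u/(1-u) * R"
  proof -
    have "Q \<le> (\<Sum>j<N. (a (Suc j) - a j) * a (Suc (Suc j)) powr (-\<theta>) * (u^(Suc j) - u^N)) / (1-u)"
      unfolding Q_def using Q_bound[OF a0 mono th(1) u] .
    also have "\<dots> \<le> (\<Sum>j<N. (a (Suc j) - a j) * a (Suc (Suc j)) powr (-\<theta>) * u^(Suc j)) / (1-u)"
      using u mono by (intro divide_right_mono sum_mono mult_left_mono) auto
    also have "\<dots> = u/(1-u) * R"
      unfolding R_def sum_divide_distrib sum_distrib_left using u by (intro sum.cong) (simp_all add: field_simps)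
    finally show ?thesis .
  qed
  have "(1 - (1-u)/(1-\<theta>)) * S = S - (1-u) * S / (1-\<theta>)" by (simp add: algebra_simps)
  also have "\<dots> \<le> Q + u^N * b N / (1-\<theta>)" using 1 by (simp add: add_divide_distrib)
  also have "\<dots> \<le> u/(1-u) * R + u^N * b N / (1-\<theta>)" using 2 by simp
  finally show ?thesis by (simp add: S_def R_def b_def)
qed



lemma ennreal_cancel_aux:
  fixes X :: ennreal and e :: real
  assumes "ennreal (2*e) \<le> X + ennreal e" "0 \<le> e"
  shows "ennreal e \<le> X"
proof (cases X)
  case (real x)
  have x0: "0 \<le> x" using real by simp
  have "ennreal (2*e) \<le> ennreal (x + e)" using assms real x0 by (simp add: ennreal_plus)
  then have "2*e \<le> x + e" using assms x0 by (subst (asm) ennreal_le_iff) auto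
  then show ?thesis using real by (simp add: ennreal_leI)
next
  case top then show ?thesis by simp
qed

lemma ball_lower:
  fixes x :: "'a::euclidean_space" and E :: "'a set" and g :: "'a \<Rightarrow> ennreal"
  assumes E: "E \<in> sets lborel" "emeasure lborel E < \<infinity>" "x \<in> E" "0 < measure lborel E"
    and c: "0 \<le> c" and beta: "0 < \<beta>"
    and g: "\<And>y. y \<notin> E \<Longrightarrow> ennreal (c / norm (x - y) powr \<beta>) \<le> g y"
  shows "ennreal (c * (2 / unit_ball_vol (DIM('a))) powr (-\<beta>/DIM('a)) * measure lborel E powr (1 - \<beta>/DIM('a)))
           \<le> (\<integral>\<^sup>+ y. g y \<partial>lborel)"
proof -
  define e where "e = measure lborel E"
  define \<omega> where "\<omega> = unit_ball_vol (DIM('a))"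
  define n where "n = real DIM('a)"
  have n: "n > 0" by (simp add: n_def)
  have om: "\<omega> > 0" by (simp add: \<omega>_def)
  have e: "e > 0" using E by (simp add: e_def)
  have Ee: "emeasure lborel E = ennreal e"
    using E by (simp add: e_def emeasure_eq_ennreal_measure)
  define R where "R = (2*e/\<omega>) powr (1/n)"
  have R: "R > 0" using e om by (simp add: R_def)
  have RN: "R ^ DIM('a) = 2*e/\<omega>"
  proof -
    have "R ^ DIM('a) = R powr n" using R by (simp add: n_def powr_realpow)
    also have "\<dots> = (2*e/\<omega>) powr (1/n * n)" unfolding R_def using e om by (simp add: powr_powr)
    also have "\<dots> = 2*e/\<omega>" using n e om by simp
    finally show ?thesis .
  qed
  have ball: "emeasure lborel (ball x R) = ennreal (2*e)"
    using R om by (simp add: emeasure_ball RN flip: \<omega>_def)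
  have bm: "ball x R \<in> sets lborel" by simp
  have "emeasure lborel (ball x R) \<le> emeasure lborel ((ball x R - E) \<union> E)"
    using E(1) bm by (intro emeasure_mono) auto
  also have "\<dots> \<le> emeasure lborel (ball x R - E) + emeasure lborel E"
    using E(1) bm by (intro emeasure_subadditive) auto
  finally have "ennreal (2*e) \<le> emeasure lborel (ball x R - E) + ennreal e"
    using ball Ee by simp
  then have bE: "ennreal e \<le> emeasure lborel (ball x R - E)"
    using ennreal_cancel_aux e by simp
  have pw: "ennreal (c / R powr \<beta>) * indicator (ball x R - E) y \<le> g y" for y
  proof (cases "y \<in> ball x R - E")
    case True
    then have y: "y \<notin> E" "dist x y < R" by auto
    have "y \<noteq> x" using y E by auto
    then have nz: "0 < norm (x - y)" by simp
    have "norm (x - y) powr \<beta> \<le> R powr \<beta>"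
      using y nz beta by (intro powr_mono2) (auto simp: dist_norm)
    then have "c / R powr \<beta> \<le> c / norm (x - y) powr \<beta>"
      using nz c R by (intro divide_left_mono) auto
    then have "ennreal (c / R powr \<beta>) \<le> g y"
      using g[OF y(1)] by (meson ennreal_leI order_trans)
    then show ?thesis using True by simp
  next
    case False then show ?thesis by simp
  qed
  have "(\<integral>\<^sup>+ y. ennreal (c / R powr \<beta>) * indicator (ball x R - E) y \<partial>lborel) \<le> (\<integral>\<^sup>+ y. g y \<partial>lborel)"
    by (intro nn_integral_mono pw)
  moreover have "(\<integral>\<^sup>+ y. ennreal (c / R powr \<beta>) * indicator (ball x R - E) y \<partial>lborel)
      = ennreal (c / R powr \<beta>) * emeasure lborel (ball x R - E)"
    using E by (intro nn_integral_cmult_indicator) auto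
  moreover have "ennreal (c / R powr \<beta>) * ennreal e \<le> ennreal (c / R powr \<beta>) * emeasure lborel (ball x R - E)"
    using bE by (intro mult_left_mono) auto
  ultimately have main0: "ennreal (c / R powr \<beta>) * ennreal e \<le> (\<integral>\<^sup>+ y. g y \<partial>lborel)"
    by (metis order_trans)
  have main: "ennreal (c / R powr \<beta> * e) \<le> (\<integral>\<^sup>+ y. g y \<partial>lborel)"
    using main0 c R e by (subst ennreal_mult) auto
  have "R powr \<beta> = (2/\<omega>) powr (\<beta>/n) * e powr (\<beta>/n)"
    unfolding R_def using e om by (simp add: powr_powr powr_mult[symmetric])
  then have "c / R powr \<beta> * e = c * (2/\<omega>) powr (-\<beta>/n) * (e * e powr (-\<beta>/n))"
    using e om by (simp add: powr_minus divide_simps)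
  also have "e * e powr (-\<beta>/n) = e powr (1 + (-\<beta>/n))"
    using e powr_add[of e 1 "-\<beta>/n"] by simp
  also have "1 + (-\<beta>/n) = 1 - \<beta>/n" by simp
  finally show ?thesis using main by (simp add: e_def \<omega>_def n_def)
qed



lemma gagliardo_tonelli:
  fixes f :: "'a::euclidean_space \<Rightarrow> real"
  assumes f: "f \<in> borel_measurable lborel"
  shows "gagliardo p s f = (\<integral>\<^sup>+ x. \<integral>\<^sup>+ y. ennreal (\<bar>f x - f y\<bar> powr p / norm (x - y) powr (real DIM('a) + s * p)) \<partial>lborel \<partial>lborel)"
proof -
  have m: "(\<lambda>z. ennreal (\<bar>f (fst z) - f (snd z)\<bar> powr p / norm (fst z - snd z) powr (real DIM('a) + s * p)))
     \<in> borel_measurable (lborel \<Otimes>\<^sub>M lborel)"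
    using f by measurable
  show ?thesis
    unfolding gagliardo_def using lborel.nn_integral_fst[OF m] by simp
qed



lemma pow_powr_swap:
  fixes \<nu> p :: real
  assumes "0 < \<nu>"
  shows "(\<nu>^n) powr p = (\<nu> powr p)^n"
proof -
  have "(\<nu>^n) powr p = (\<nu> powr real n) powr p" using assms by (simp add: powr_realpow)
  also have "\<dots> = \<nu> powr (real n * p)" by (simp add: powr_powr)
  also have "\<dots> = (\<nu> powr p)^n" using assms by (simp add: powr_power)
  finally show ?thesis .
qed

lemma lower_part:
  fixes f :: "'a::euclidean_space \<Rightarrow> real" and M \<nu> p s :: real and N :: nat
  assumes f: "f \<in> borel_measurable lborel" and fnn: "\<And>x. 0 \<le> f x"
    and fin: "emeasure lborel {x. 0 < f x} < \<infinity>"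
    and M: "0 < M" and nu: "0 < \<nu>" "\<nu> < 1" and ps: "0 < s" "0 < p"
    and t_def: "t = (\<lambda>n::nat. M * \<nu>^n)"
    and A_def: "A = (\<lambda>n. {x. t n < f x})"
    and a_def: "a = (\<lambda>n. measure lborel (A n))"
  shows "ennreal ((2 / unit_ball_vol DIM('a)) powr (-(DIM('a) + s*p)/DIM('a)) * (\<nu>*(1-\<nu>)) powr p * M powr p *
      (\<Sum>n<N. (\<nu> powr p)^n * ((a (Suc n) - a n) * a (Suc (Suc n)) powr (1 - (DIM('a) + s*p)/DIM('a)))))
     \<le> gagliardo p s f"
proof -
  define \<beta> where "\<beta> = real DIM('a) + s*p"
  define C1 where "C1 = (2 / unit_ball_vol DIM('a)) powr (-\<beta>/DIM('a))"
  define D where "D n = A (Suc n) - A n" for n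
  define F where "F x y = ennreal (\<bar>f x - f y\<bar> powr p / norm (x - y) powr \<beta>)" for x y
  have beta: "0 < \<beta>" using ps by (simp add: \<beta>_def add_pos_pos)
  have C1: "0 \<le> C1" by (simp add: C1_def)
  have tpos: "0 < t n" for n using M nu by (simp add: t_def)
  have tmono: "t (Suc n) \<le> t n" for n using M nu by (simp add: t_def mult_left_mono mult_left_le)
  have Ameas: "A n \<in> sets lborel" for n
    unfolding A_def using f by measurable
  have Asub: "A n \<subseteq> {x. 0 < f x}" for n using tpos unfolding A_def by (auto intro: less_trans)
  have posm: "{x. 0 < f x} \<in> sets lborel" using f by measurable
  have Afin: "emeasure lborel (A n) < \<infinity>" for n
    using emeasure_mono[OF Asub[of n] posm] fin by (meson le_less_trans)
  have Amono: "A n \<subseteq> A (Suc n)" for n using tmono unfolding A_def by (auto intro: le_less_trans)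
  have Amono2: "m \<le> n \<Longrightarrow> A m \<subseteq> A n" for m n
    using lift_Suc_mono_le[of A, OF Amono] by blast
  have Dmeas: "D n \<in> sets lborel" for n using Ameas by (simp add: D_def)
  have Dem: "emeasure lborel (D n) = ennreal (a (Suc n) - a n)" for n
  proof -
    have "measure lborel (D n) = a (Suc n) - a n"
      unfolding D_def a_def using Afin Ameas Amono by (intro measure_Diff) (auto simp: less_top)
    moreover have "emeasure lborel (D n) \<le> emeasure lborel (A (Suc n))"
      using Ameas by (intro emeasure_mono) (auto simp: D_def)
    then have "emeasure lborel (D n) \<noteq> \<infinity>" using Afin[of "Suc n"] by (auto simp: top_unique)
    then have "emeasure lborel (D n) = ennreal (measure lborel (D n))"
      by (intro emeasure_eq_ennreal_measure) simp
    ultimately show ?thesis by simp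
  qed
  have anonneg: "0 \<le> a n" for n by (simp add: a_def)
  have amono: "a n \<le> a (Suc n)" for n
    unfolding a_def using Afin Ameas Amono by (intro measure_mono_fmeasurable) (auto simp: fmeasurable_def)
  define h where "h n = C1 * (t (Suc n) - t (Suc (Suc n))) powr p * a (Suc (Suc n)) powr (1 - \<beta>/DIM('a))" for n
  have hnn: "0 \<le> h n" for n using C1 by (simp add: h_def)
  have key: "ennreal (h n) \<le> (\<integral>\<^sup>+ y. F x y \<partial>lborel)" if x: "x \<in> D n" for x n
  proof (cases "a (Suc (Suc n)) = 0")
    case True then show ?thesis by (simp add: h_def)
  next
    case False
    then have apos: "0 < measure lborel (A (Suc (Suc n)))" using anonneg[of "Suc (Suc n)"] unfolding a_def by linarith
    have xE: "x \<in> A (Suc (Suc n))" using x Amono[of "Suc n"] by (auto simp: D_def)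
    have fx: "t (Suc n) < f x" using x by (auto simp: D_def A_def)
    have c0: "0 \<le> t (Suc n) - t (Suc (Suc n))" using tmono[of "Suc n"] by simp
    have g: "ennreal ((t (Suc n) - t (Suc (Suc n))) powr p / norm (x - y) powr \<beta>) \<le> F x y"
      if y: "y \<notin> A (Suc (Suc n))" for y
    proof -
      have "f y \<le> t (Suc (Suc n))" using y by (auto simp: A_def)
      then have "t (Suc n) - t (Suc (Suc n)) \<le> \<bar>f x - f y\<bar>" using fx by simp
      then have "(t (Suc n) - t (Suc (Suc n))) powr p \<le> \<bar>f x - f y\<bar> powr p"
        using c0 ps by (intro powr_mono2) auto
      then show ?thesis unfolding F_def
        by (intro ennreal_leI divide_right_mono) auto
    qed
    have "ennreal ((t (Suc n) - t (Suc (Suc n))) powr p * C1 * measure lborel (A (Suc (Suc n))) powr (1 - \<beta>/DIM('a)))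
       \<le> (\<integral>\<^sup>+ y. F x y \<partial>lborel)"
      unfolding C1_def
      by (rule ball_lower[OF Ameas Afin xE apos _ beta g]) simp
    then show ?thesis by (simp add: h_def a_def mult_ac)
  qed
  have pw: "(\<Sum>n<K. ennreal (h n) * indicator (D n) x) \<le> (\<integral>\<^sup>+ y. F x y \<partial>lborel) * indicator (A K) x" for K x
  proof (induction K)
    case 0 then show ?case by simp
  next
    case (Suc K)
    show ?case
    proof (cases "x \<in> A K")
      case True
      then have "x \<notin> D K" "x \<in> A (Suc K)" using Amono by (auto simp: D_def)
      then show ?thesis using Suc.IH True by simp
    next
      case False
      then have z: "(\<Sum>n<K. ennreal (h n) * indicator (D n) x) = 0" using Suc.IH by simp
      show ?thesis
      proof (cases "x \<in> D K")
        case True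
        then have "x \<in> A (Suc K)" by (simp add: D_def)
        then show ?thesis using z key[OF True] True by simp
      next
        case False
        then show ?thesis using z by simp
      qed
    qed
  qed
  have "(\<integral>\<^sup>+ x. (\<Sum>n<N. ennreal (h n) * indicator (D n) x) \<partial>lborel) \<le> (\<integral>\<^sup>+ x. \<integral>\<^sup>+ y. F x y \<partial>lborel \<partial>lborel)"
  proof (rule nn_integral_mono)
    fix x
    have "(\<Sum>n<N. ennreal (h n) * indicator (D n) x) \<le> (\<integral>\<^sup>+ y. F x y \<partial>lborel) * indicator (A N) x" by (rule pw)
    also have "\<dots> \<le> (\<integral>\<^sup>+ y. F x y \<partial>lborel)" by (simp add: indicator_def)
    finally show "(\<Sum>n<N. ennreal (h n) * indicator (D n) x) \<le> (\<integral>\<^sup>+ y. F x y \<partial>lborel)" .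
  qed
  also have "\<dots> = gagliardo p s f"
    using gagliardo_tonelli[OF f, of p s] by (simp add: F_def \<beta>_def)
  also have "(\<integral>\<^sup>+ x. (\<Sum>n<N. ennreal (h n) * indicator (D n) x) \<partial>lborel) = (\<Sum>n<N. ennreal (h n) * emeasure lborel (D n))"
    using Dmeas by (subst nn_integral_sum) (auto simp: nn_integral_cmult_indicator)
  also have "\<dots> = ennreal (\<Sum>n<N. h n * (a (Suc n) - a n))"
    using hnn amono by (simp add: Dem ennreal_mult[symmetric])
  finally have main: "ennreal (\<Sum>n<N. h n * (a (Suc n) - a n)) \<le> gagliardo p s f" .
  have tt: "(t (Suc n) - t (Suc (Suc n))) powr p = M powr p * (\<nu>*(1-\<nu>)) powr p * (\<nu> powr p)^n" for n
  proof -
    have "t (Suc n) - t (Suc (Suc n)) = M * (\<nu>*(1-\<nu>)) * \<nu>^n" by (simp add: t_def algebra_simps)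
    then show ?thesis using M nu by (simp add: powr_mult pow_powr_swap)
  qed
  have "(\<Sum>n<N. h n * (a (Suc n) - a n)) = C1 * (\<nu>*(1-\<nu>)) powr p * M powr p *
      (\<Sum>n<N. (\<nu> powr p)^n * ((a (Suc n) - a n) * a (Suc (Suc n)) powr (1 - \<beta>/DIM('a))))"
    unfolding sum_distrib_left by (intro sum.cong) (simp_all add: h_def tt mult_ac)
  then show ?thesis using main by (simp add: C1_def \<beta>_def)
qed



lemma sum_powr_le:
  fixes x :: "nat \<Rightarrow> real"
  assumes "\<And>n. 0 \<le> x n" "1 \<le> r"
  shows "(\<Sum>n<N. x n powr r) \<le> (\<Sum>n<N. x n) powr r"
proof -
  define S where "S = (\<Sum>n<N. x n)"
  have S0: "0 \<le> S" using assms by (simp add: S_def sum_nonneg)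
  have le: "x n powr r \<le> x n * S powr (r - 1)" if "n < N" for n
  proof (cases "x n = 0")
    case True then show ?thesis by simp
  next
    case False
    then have xp: "0 < x n" using assms by (simp add: order_le_neq_trans)
    have "x n \<le> S" unfolding S_def using that assms
      by (intro member_le_sum) auto
    then have "x n powr (r-1) \<le> S powr (r-1)" using xp assms by (intro powr_mono2) auto
    moreover have "x n powr r = x n * x n powr (r - 1)"
      using xp powr_add[of "x n" 1 "r-1"] by simp
    ultimately show ?thesis using xp by simp
  qed
  have "(\<Sum>n<N. x n powr r) \<le> (\<Sum>n<N. x n * S powr (r - 1))" by (intro sum_mono le) auto
  also have "\<dots> = S * S powr (r-1)" by (simp add: S_def sum_distrib_right)
  also have "\<dots> = S powr r"
  proof (cases "S = 0")
    case True then show ?thesis using assms by simp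
  next
    case False then show ?thesis using S0 powr_add[of S 1 "r-1"] by simp
  qed
  finally show ?thesis by (simp add: S_def)
qed

lemma upper_pointwise:
  fixes f :: "'a \<Rightarrow> real" and t :: "nat \<Rightarrow> real"
  assumes fnn: "\<And>x. 0 \<le> f x" and fM: "\<And>x. f x \<le> t 0" and q: "0 < q"
    and A_def: "A = (\<lambda>n. {x. t n < f x})"
  shows "ennreal (f x powr q) * indicator (A K) x \<le> (\<Sum>n<K. ennreal (t n powr q) * indicator (A (Suc n) - A n) x)"
proof (induction K)
  case 0
  have "x \<notin> A 0" using fM by (simp add: A_def not_less)
  then show ?case by simp
next
  case (Suc K)
  show ?case
  proof (cases "x \<in> A K")
    case True
    then have "ennreal (f x powr q) * indicator (A (Suc K)) x \<le> ennreal (f x powr q) * indicator (A K) x"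
      by (simp add: indicator_def)
    also have "\<dots> \<le> (\<Sum>n<K. ennreal (t n powr q) * indicator (A (Suc n) - A n) x)" by (rule Suc.IH)
    also have "\<dots> \<le> (\<Sum>n<Suc K. ennreal (t n powr q) * indicator (A (Suc n) - A n) x)" by simp
    finally show ?thesis .
  next
    case False
    show ?thesis
    proof (cases "x \<in> A (Suc K)")
      case True
      then have "f x \<le> t K" using False by (simp add: A_def not_less)
      then have "f x powr q \<le> t K powr q" using fnn q by (intro powr_mono2) auto
      then have "ennreal (f x powr q) \<le> ennreal (t K powr q)" by (rule ennreal_leI)
      then show ?thesis using True False by (simp add: add_increasing)
    next
      case False then show ?thesis by simp
    qed
  qed
qed



lemma sobolev_bounded_aux:
  fixes f :: "'a::euclidean_space \<Rightarrow> real" and M \<nu> p s :: real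
  assumes ps: "0 < s" "1 < p" "s * p < real DIM('a)"
    and nu: "0 < \<nu>" "\<nu> < 1" and kap: "1 - \<nu> powr p < 1 - s * p / real DIM('a)"
    and f: "f \<in> borel_measurable lborel" and fnn: "\<And>x. 0 \<le> f x" and fM: "\<And>x. f x \<le> M"
    and M: "0 < M" and fin: "emeasure lborel {x. 0 < f x} < \<infinity>"
    and G: "gagliardo p s f < \<infinity>"
  shows "(\<integral>\<^sup>+ x. ennreal (f x powr (real DIM('a) * p / (real DIM('a) - s * p))) \<partial>lborel)
    \<le> ennreal (((\<nu> powr p) / ((1 - \<nu> powr p) * (1 - (1 - \<nu> powr p) / (1 - s * p / real DIM('a)))
          * ((2 / unit_ball_vol DIM('a)) powr (-(DIM('a) + s*p)/DIM('a)) * (\<nu>*(1-\<nu>)) powr p))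
        * enn2real (gagliardo p s f)) powr (real DIM('a) / (real DIM('a) - s * p)))"
proof -
  define n where "n = real DIM('a)"
  define \<theta> where "\<theta> = s * p / n"
  define u where "u = \<nu> powr p"
  define \<kappa> where "\<kappa> = 1 - (1 - u) / (1 - \<theta>)"
  define C1 where "C1 = (2 / unit_ball_vol DIM('a)) powr (-(DIM('a) + s*p)/DIM('a))"
  define K0 where "K0 = C1 * (\<nu>*(1-\<nu>)) powr p"
  define q where "q = n * p / (n - s * p)"
  define r where "r = n / (n - s * p)"
  define g where "g = enn2real (gagliardo p s f)"
  define m where "m = measure lborel {x. 0 < f x}"
  define t where "t = (\<lambda>k::nat. M * \<nu>^k)"
  define A where "A = (\<lambda>k. {x. t k < f x})"
  define a where "a = (\<lambda>k. measure lborel (A k))"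
  define S where "S N = (\<Sum>k<N. u^k * a (Suc k) powr (1-\<theta>))" for N
  define R where "R N = (\<Sum>k<N. u^k * ((a (Suc k) - a k) * a (Suc (Suc k)) powr (-\<theta>)))" for N
  define V where "V N = (1/\<kappa>) * (u/(1-u) * (g / K0) + M powr p * u^N * m powr (1-\<theta>) / (1-\<theta>))" for N
  have n: "0 < n" by (simp add: n_def)
  have th: "0 < \<theta>" "\<theta> < 1" using ps n by (auto simp: \<theta>_def n_def)
  have u: "0 < u" "u < 1" using nu ps powr_less_mono2[of p \<nu> 1] by (auto simp: u_def)
  have kappa: "0 < \<kappa>" using kap th by (simp add: \<kappa>_def u_def \<theta>_def n_def field_simps)
  have ubv: "unit_ball_vol (real DIM('a)) > 0" by (rule unit_ball_vol_pos) simp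
  have ubvne: "unit_ball_vol (real DIM('a)) \<noteq> 0" using ubv by linarith
  have C1: "0 < C1" unfolding C1_def using ubvne by simp
  have K0: "0 < K0" using C1 nu by (simp add: K0_def)
  have q: "0 < q" "q = p * r" using ps n by (auto simp: q_def r_def n_def)
  have r: "1 \<le> r" using ps n by (simp add: r_def n_def)
  have gr: "(1 - \<theta>) * r = 1" using ps n by (simp add: \<theta>_def r_def n_def field_simps)
  have g0: "0 \<le> g" by (simp add: g_def)
  have m0: "0 \<le> m" by (simp add: m_def)
  have tpos: "0 < t k" for k using M nu by (simp add: t_def)
  have tmono: "t (Suc k) \<le> t k" for k using M nu by (simp add: t_def mult_left_mono mult_left_le)
  have Ameas: "A k \<in> sets lborel" for k unfolding A_def using f by measurable
  have posm: "{x. 0 < f x} \<in> sets lborel" using f by measurable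
  have Asub: "A k \<subseteq> {x. 0 < f x}" for k using tpos unfolding A_def by (auto intro: less_trans)
  have Afin: "emeasure lborel (A k) < \<infinity>" for k
    using emeasure_mono[OF Asub[of k] posm] fin by (meson le_less_trans)
  have Amono: "A k \<subseteq> A (Suc k)" for k using tmono unfolding A_def by (auto intro: le_less_trans)
  have a0: "a 0 = 0"
  proof -
    have "A 0 = {}" using fM by (auto simp: A_def t_def not_less)
    then show ?thesis by (simp add: a_def)
  qed
  have amono: "a k \<le> a (Suc k)" for k
    unfolding a_def using Afin Ameas Amono by (intro measure_mono_fmeasurable) (auto simp: fmeasurable_def)
  have anonneg: "0 \<le> a k" for k by (simp add: a_def)
  have am: "a k \<le> m" for k
    unfolding a_def m_def using Asub fin posm Ameas by (intro measure_mono_fmeasurable) (auto simp: fmeasurable_def)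
  have Dem: "emeasure lborel (A (Suc k) - A k) = ennreal (a (Suc k) - a k)" for k
  proof -
    have "measure lborel (A (Suc k) - A k) = a (Suc k) - a k"
      unfolding a_def using Afin Ameas Amono by (intro measure_Diff) (auto simp: less_top)
    moreover have "emeasure lborel (A (Suc k) - A k) \<le> emeasure lborel (A (Suc k))"
      using Ameas by (intro emeasure_mono) auto
    then have "emeasure lborel (A (Suc k) - A k) \<noteq> \<infinity>" using Afin[of "Suc k"] by (auto simp: top_unique)
    then have "emeasure lborel (A (Suc k) - A k) = ennreal (measure lborel (A (Suc k) - A k))"
      by (intro emeasure_eq_ennreal_measure) simp
    ultimately show ?thesis by simp
  qed
  have expo: "1 - (real DIM('a) + s*p)/real DIM('a) = -\<theta>"
    using n by (simp add: \<theta>_def n_def field_simps)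
  have L: "K0 * M powr p * R N \<le> g" for N
  proof -
    have le1: "ennreal (C1 * (\<nu>*(1-\<nu>)) powr p * M powr p * R N) \<le> gagliardo p s f"
      using lower_part[OF f fnn fin M nu ps(1) _ t_def A_def a_def, where N=N and p=p] ps
      unfolding C1_def R_def u_def expo by simp
    have nn: "0 \<le> C1 * (\<nu>*(1-\<nu>)) powr p * M powr p * R N"
      using C1 u anonneg amono unfolding R_def by (intro mult_nonneg_nonneg sum_nonneg) (auto simp: diff_le_eq)
    have "enn2real (ennreal (C1 * (\<nu>*(1-\<nu>)) powr p * M powr p * R N)) \<le> enn2real (gagliardo p s f)"
      using le1 G by (intro enn2real_mono) (auto simp: less_top)
    then have "C1 * (\<nu>*(1-\<nu>)) powr p * M powr p * R N \<le> g"
      unfolding g_def using nn by simp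
    then show ?thesis by (simp add: K0_def)
  qed
  have LR: "\<kappa> * S N \<le> u/(1-u) * R N + u^N * a N powr (1-\<theta>) / (1-\<theta>)" for N
    using levels_real[OF a0 amono th u, of N] unfolding \<kappa>_def S_def R_def by simp
  have aux: "\<And>X k Y W Z::real. X * (k * (Y * W + Z)) = k * (Y * (X * W) + X * Z)"
    by (simp add: algebra_simps)
  have SV: "M powr p * S N \<le> V N" for N
  proof -
    have R1: "R N \<le> g / (K0 * M powr p)" using L[of N] K0 M by (simp add: field_simps)
    have aa: "a N powr (1-\<theta>) \<le> m powr (1-\<theta>)" using am anonneg th by (intro powr_mono2) auto
    have "\<kappa> * S N \<le> u/(1-u) * (g / (K0 * M powr p)) + u^N * m powr (1-\<theta>) / (1-\<theta>)"
    proof -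
      have "u/(1-u) * R N \<le> u/(1-u) * (g / (K0 * M powr p))" using R1 u by (intro mult_left_mono) auto
      moreover have "u^N * a N powr (1-\<theta>) / (1-\<theta>) \<le> u^N * m powr (1-\<theta>) / (1-\<theta>)"
        using aa u th by (intro divide_right_mono mult_left_mono) auto
      ultimately show ?thesis using LR[of N] by linarith
    qed
    then have "S N \<le> (1/\<kappa>) * (u/(1-u) * (g / (K0 * M powr p)) + u^N * m powr (1-\<theta>) / (1-\<theta>))"
      using kappa by (simp add: field_simps)
    then have "M powr p * S N \<le> M powr p * ((1/\<kappa>) * (u/(1-u) * (g / (K0 * M powr p)) + u^N * m powr (1-\<theta>) / (1-\<theta>)))"
      using M by (intro mult_left_mono) auto
    also have "\<dots> = (1/\<kappa>) * (u/(1-u) * (M powr p * (g / (K0 * M powr p))) + M powr p * (u^N * m powr (1-\<theta>) / (1-\<theta>)))"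
      by (rule aux)
    also have "M powr p * (g / (K0 * M powr p)) = g / K0" using M K0 by simp
    also have "(1/\<kappa>) * (u/(1-u) * (g / K0) + M powr p * (u^N * m powr (1-\<theta>) / (1-\<theta>))) = V N"
      by (simp add: V_def mult_ac)
    finally show ?thesis .
  qed
  have S0: "0 \<le> S N" for N using u by (simp add: S_def sum_nonneg)
  have U: "(\<integral>\<^sup>+ x. ennreal (f x powr q) * indicator (A N) x \<partial>lborel) \<le> ennreal ((V N) powr r)" for N
  proof -
    have fM0: "f x \<le> t 0" for x using fM by (simp add: t_def)
    have "(\<integral>\<^sup>+ x. ennreal (f x powr q) * indicator (A N) x \<partial>lborel)
        \<le> (\<integral>\<^sup>+ x. (\<Sum>k<N. ennreal (t k powr q) * indicator (A (Suc k) - A k) x) \<partial>lborel)"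
      by (intro nn_integral_mono upper_pointwise[OF fnn fM0 q(1) A_def])
    also have "\<dots> = (\<Sum>k<N. ennreal (t k powr q) * emeasure lborel (A (Suc k) - A k))"
      using Ameas by (subst nn_integral_sum) (auto simp: nn_integral_cmult_indicator)
    also have "\<dots> = ennreal (\<Sum>k<N. t k powr q * (a (Suc k) - a k))"
      using amono by (simp add: Dem ennreal_mult[symmetric])
    also have "(\<Sum>k<N. t k powr q * (a (Suc k) - a k)) \<le> (\<Sum>k<N. (M powr p * u^k * a (Suc k) powr (1-\<theta>)) powr r)"
    proof (rule sum_mono)
      fix k assume "k \<in> {..<N}"
      have "t k powr q * (a (Suc k) - a k) \<le> t k powr q * a (Suc k)"
        using anonneg[of k] by (intro mult_left_mono) auto
      also have "t k powr p = M powr p * u^k"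
        using M nu by (simp add: t_def powr_mult pow_powr_swap u_def)
      then have "t k powr q * a (Suc k) = (M powr p * u^k * a (Suc k) powr (1-\<theta>)) powr r"
      proof -
        assume tp: "t k powr p = M powr p * u^k"
        have "(M powr p * u^k * a (Suc k) powr (1-\<theta>)) powr r = (t k powr p) powr r * (a (Suc k) powr (1-\<theta>)) powr r"
          using tp M u anonneg by (simp add: powr_mult)
        also have "\<dots> = t k powr q * a (Suc k)"
          using gr q anonneg[of "Suc k"] by (simp add: powr_powr)
        finally show ?thesis by simp
      qed
      finally show "t k powr q * (a (Suc k) - a k) \<le> (M powr p * u^k * a (Suc k) powr (1-\<theta>)) powr r" .
    qed
    also have "\<dots> \<le> (\<Sum>k<N. M powr p * u^k * a (Suc k) powr (1-\<theta>)) powr r"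
      using u r by (intro sum_powr_le) auto
    also have "(\<Sum>k<N. M powr p * u^k * a (Suc k) powr (1-\<theta>)) = M powr p * S N"
      by (simp add: S_def sum_distrib_left mult_ac)
    also have "(M powr p * S N) powr r \<le> (V N) powr r"
      using SV S0 M r by (intro powr_mono2) auto
    finally show ?thesis by (simp add: ennreal_leI)
  qed
  have lim1: "(\<lambda>N. \<integral>\<^sup>+ x. ennreal (f x powr q) * indicator (A N) x \<partial>lborel) \<longlonglongrightarrow> (\<integral>\<^sup>+ x. ennreal (f x powr q) \<partial>lborel)"
  proof (rule nn_integral_LIMSEQ)
    show "incseq (\<lambda>N x. ennreal (f x powr q) * indicator (A N) x)"
      using lift_Suc_mono_le[of A, OF Amono]
      by (auto simp: incseq_def le_fun_def indicator_def intro!: mult_left_mono)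
    show "(\<lambda>x. ennreal (f x powr q) * indicator (A N) x) \<in> borel_measurable lborel" for N
      using f Ameas by measurable
    fix x
    show "(\<lambda>N. ennreal (f x powr q) * indicator (A N) x) \<longlonglongrightarrow> ennreal (f x powr q)"
    proof (cases "f x = 0")
      case True then show ?thesis by simp
    next
      case False
      then have fx: "0 < f x" using fnn[of x] by simp
      have "t \<longlonglongrightarrow> M * 0" unfolding t_def using nu by (intro tendsto_mult tendsto_const LIMSEQ_power_zero) auto
      then have "eventually (\<lambda>N. t N < f x) sequentially" using fx by (intro order_tendstoD) auto
      then have "eventually (\<lambda>N. ennreal (f x powr q) * indicator (A N) x = ennreal (f x powr q)) sequentially"
        by eventually_elim (simp add: A_def)
      then show ?thesis by (rule tendsto_eventually)
    qed
  qed
  have lim2: "(\<lambda>N. ennreal ((V N) powr r)) \<longlonglongrightarrow> ennreal (((1/\<kappa>) * (u/(1-u) * (g / K0))) powr r)"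
  proof -
    have "(\<lambda>N. M powr p * u^N * m powr (1-\<theta>) / (1-\<theta>)) \<longlonglongrightarrow> M powr p * 0 * m powr (1-\<theta>) / (1-\<theta>)"
      using u th by (intro tendsto_intros LIMSEQ_power_zero) auto
    then have V: "V \<longlonglongrightarrow> (1/\<kappa>) * (u/(1-u) * (g / K0))"
      unfolding V_def using u th kappa by (auto intro!: tendsto_eq_intros)
    have "(\<lambda>N. V N powr r) \<longlonglongrightarrow> ((1/\<kappa>) * (u/(1-u) * (g / K0))) powr r"
    proof (rule tendsto_powr'[OF V tendsto_const])
      have "0 \<le> V N" for N using kappa u g0 K0 M m0 th by (simp add: V_def)
      then show "(1/\<kappa>) * (u/(1-u) * (g / K0)) \<noteq> 0 \<or> (0 < r \<and> eventually (\<lambda>N. 0 \<le> V N) sequentially)"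
        using r by simp
    qed
    then show ?thesis by (rule tendsto_ennrealI)
  qed
  have "(\<integral>\<^sup>+ x. ennreal (f x powr q) \<partial>lborel) \<le> ennreal (((1/\<kappa>) * (u/(1-u) * (g / K0))) powr r)"
    by (rule LIMSEQ_le[OF lim1 lim2]) (use U in auto)
  moreover have "(1/\<kappa>) * (u/(1-u) * (g / K0)) = u / ((1-u) * \<kappa> * K0) * g"
    by (simp add: field_simps)
  ultimately show ?thesis
    by (simp add: q_def r_def n_def g_def u_def \<kappa>_def K0_def C1_def \<theta>_def mult_ac)
qed



lemma sobolev_exists:
  assumes ps: "0 < s" "1 < p" "s * p < real DIM('a::euclidean_space)"
  shows "\<exists>K\<ge>0. \<forall>(f::'a \<Rightarrow> real) M. f \<in> borel_measurable lborel \<longrightarrow> (\<forall>x. 0 \<le> f x \<and> f x \<le> M) \<longrightarrow> 0 < M \<longrightarrow>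
     emeasure lborel {x. 0 < f x} < \<infinity> \<longrightarrow> gagliardo p s f < \<infinity> \<longrightarrow>
     (\<integral>\<^sup>+ x. ennreal (f x powr (real DIM('a) * p / (real DIM('a) - s * p))) \<partial>lborel)
      \<le> ennreal ((K * enn2real (gagliardo p s f)) powr (real DIM('a) / (real DIM('a) - s * p)))"
proof -
  define \<theta> where "\<theta> = s * p / real DIM('a)"
  have th: "0 < \<theta>" "\<theta> < 1" using ps by (auto simp: \<theta>_def)
  define \<nu> where "\<nu> = (sqrt \<theta>) powr (1/p)"
  have sq: "0 < sqrt \<theta>" "sqrt \<theta> < 1" using th by auto
  have nup: "\<nu> powr p = sqrt \<theta>" using ps sq by (simp add: \<nu>_def powr_powr)
  have nu: "0 < \<nu>" "\<nu> < 1" using sq ps powr_less_mono2[of "1/p" "sqrt \<theta>" 1] by (auto simp: \<nu>_def)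
  have "\<theta> < sqrt \<theta>"
  proof -
    have "\<theta> = sqrt \<theta> * sqrt \<theta>" using th by simp
    also have "\<dots> < sqrt \<theta> * 1" using sq by (intro mult_strict_left_mono) auto
    finally show ?thesis by simp
  qed
  then have kap: "1 - \<nu> powr p < 1 - s * p / real DIM('a)" using nup by (simp add: \<theta>_def)
  define K where "K = ((\<nu> powr p) / ((1 - \<nu> powr p) * (1 - (1 - \<nu> powr p) / (1 - s * p / real DIM('a)))
          * ((2 / unit_ball_vol DIM('a)) powr (-(DIM('a) + s*p)/DIM('a)) * (\<nu>*(1-\<nu>)) powr p)))"
  have K: "0 \<le> K"
  proof -
    have "0 < 1 - \<nu> powr p" using nup sq by simp
    moreover have "0 < 1 - s * p / real DIM('a)" using th by (simp add: \<theta>_def)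
    moreover have "0 < 1 - (1 - \<nu> powr p) / (1 - s * p / real DIM('a))" using kap calculation by simp
    moreover have "0 < \<nu> * (1 - \<nu>)" using nu by simp
    moreover have ubv: "unit_ball_vol (real DIM('a)) > 0" by (rule unit_ball_vol_pos) simp
    then have ubvne: "unit_ball_vol (real DIM('a)) \<noteq> 0" by linarith
    ultimately show ?thesis unfolding K_def using ubvne by (intro divide_nonneg_pos mult_pos_pos) auto
  qed
  show ?thesis
    using sobolev_bounded_aux[OF ps nu kap] K unfolding K_def[symmetric] by blast
qed

lemma sobolev_Xps:
  fixes \<Omega> :: "'a::euclidean_space set"
  assumes ps: "0 < s" "1 < p" "s * p < real DIM('a)"
    and Om: "\<Omega> \<in> sets lborel" "bounded \<Omega>"
  shows "\<exists>K\<ge>0. \<forall>u\<in>Xps \<Omega> p s.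
     (\<integral>\<^sup>+ x. ennreal (max (u x) 0 powr (real DIM('a) * p / (real DIM('a) - s * p))) \<partial>lborel)
      \<le> ennreal ((K * enn2real (gagliardo p s u)) powr (real DIM('a) / (real DIM('a) - s * p)))"
proof -
  define q where "q = real DIM('a) * p / (real DIM('a) - s * p)"
  define r where "r = real DIM('a) / (real DIM('a) - s * p)"
  have q: "0 < q" using ps by (simp add: q_def)
  have r: "0 < r" using ps by (simp add: r_def)
  obtain K where K: "K \<ge> 0" and KK: "\<And>(f::'a \<Rightarrow> real) M. f \<in> borel_measurable lborel \<Longrightarrow> (\<forall>x. 0 \<le> f x \<and> f x \<le> M) \<Longrightarrow> 0 < M \<Longrightarrow>
     emeasure lborel {x. 0 < f x} < \<infinity> \<Longrightarrow> gagliardo p s f < \<infinity> \<Longrightarrow>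
     (\<integral>\<^sup>+ x. ennreal (f x powr q) \<partial>lborel) \<le> ennreal ((K * enn2real (gagliardo p s f)) powr r)"
    using sobolev_exists[OF ps] unfolding q_def r_def by blast
  have "\<forall>u\<in>Xps \<Omega> p s. (\<integral>\<^sup>+ x. ennreal (max (u x) 0 powr q) \<partial>lborel) \<le> ennreal ((K * enn2real (gagliardo p s u)) powr r)"
  proof
    fix u assume u: "u \<in> Xps \<Omega> p s"
    then have ub: "u \<in> borel_measurable lborel" and uG: "gagliardo p s u < \<infinity>"
      and uAE: "AE x in lborel. x \<notin> \<Omega> \<longrightarrow> u x = 0" by (auto simp: Xps_def)
    define F where "F M x = min (max (u x) 0) (real (Suc M))" for M x
    have Fb: "F M \<in> borel_measurable lborel" for M unfolding F_def using ub by measurable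
    have Fbd: "\<forall>x. 0 \<le> F M x \<and> F M x \<le> real (Suc M)" for M by (auto simp: F_def)
    have Ffin: "emeasure lborel {x. 0 < F M x} < \<infinity>" for M
    proof -
      have "{x. 0 < F M x} \<in> sets lborel" using Fb[of M] by measurable
      moreover have "AE x in lborel. x \<in> {x. 0 < F M x} \<longrightarrow> x \<in> \<Omega>"
        using uAE by eventually_elim (auto simp: F_def)
      ultimately have "emeasure lborel {x. 0 < F M x} \<le> emeasure lborel \<Omega>"
        using Om by (intro emeasure_mono_AE) auto
      then show ?thesis using emeasure_bounded_finite[OF Om(2)] by (meson le_less_trans)
    qed
    have FG: "gagliardo p s (F M) \<le> gagliardo p s u" for M
      unfolding gagliardo_def
    proof (intro nn_integral_mono ennreal_leI divide_right_mono)
      fix z :: "'a \<times> 'a"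
      have "\<bar>F M (fst z) - F M (snd z)\<bar> \<le> \<bar>u (fst z) - u (snd z)\<bar>"
        by (auto simp: F_def min_def max_def)
      then show "\<bar>F M (fst z) - F M (snd z)\<bar> powr p \<le> \<bar>u (fst z) - u (snd z)\<bar> powr p"
        using ps by (intro powr_mono2) auto
    qed simp
    have FG2: "gagliardo p s (F M) < \<infinity>" for M using FG[of M] uG by (meson le_less_trans)
    have bound: "(\<integral>\<^sup>+ x. ennreal (F M x powr q) \<partial>lborel) \<le> ennreal ((K * enn2real (gagliardo p s u)) powr r)" for M
    proof -
      have "(\<integral>\<^sup>+ x. ennreal (F M x powr q) \<partial>lborel) \<le> ennreal ((K * enn2real (gagliardo p s (F M))) powr r)"
        by (rule KK[OF Fb Fbd _ Ffin FG2]) simp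
      also have "\<dots> \<le> ennreal ((K * enn2real (gagliardo p s u)) powr r)"
        using FG[of M] uG K r
        by (intro ennreal_leI powr_mono2 mult_left_mono enn2real_mono) (auto simp: less_top)
      finally show ?thesis .
    qed
    have lim: "(\<lambda>M. \<integral>\<^sup>+ x. ennreal (F M x powr q) \<partial>lborel) \<longlonglongrightarrow> (\<integral>\<^sup>+ x. ennreal (max (u x) 0 powr q) \<partial>lborel)"
    proof (rule nn_integral_LIMSEQ)
      show "incseq (\<lambda>M x. ennreal (F M x powr q))"
        unfolding incseq_def le_fun_def
      proof (intro allI impI ennreal_leI powr_mono2)
        fix m n :: nat and x assume "m \<le> n"
        then show "F m x \<le> F n x" by (auto simp: F_def min_def max_def)
      qed (use q in \<open>auto simp: F_def\<close>)
      show "(\<lambda>x. ennreal (F M x powr q)) \<in> borel_measurable lborel" for M using Fb[of M] by measurable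
      fix x
      obtain N :: nat where N: "max (u x) 0 \<le> real N" using real_arch_simple by blast
      have "eventually (\<lambda>M. ennreal (F M x powr q) = ennreal (max (u x) 0 powr q)) sequentially"
        unfolding eventually_sequentially
        by (rule exI[of _ N]) (use N in \<open>auto simp: F_def min_def\<close>)
      then show "(\<lambda>M. ennreal (F M x powr q)) \<longlonglongrightarrow> ennreal (max (u x) 0 powr q)"
        by (rule tendsto_eventually)
    qed
    show "(\<integral>\<^sup>+ x. ennreal (max (u x) 0 powr q) \<partial>lborel) \<le> ennreal ((K * enn2real (gagliardo p s u)) powr r)"
      by (rule LIMSEQ_le[OF lim tendsto_const]) (use bound in auto)
  qed
  then show ?thesis using K unfolding q_def r_def by blast
qed



lemma set_int_nonneg:
  fixes g :: "'a \<Rightarrow> real"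
  assumes "\<And>x. 0 \<le> g x"
  shows "0 \<le> (LINT x:A|M. g x)"
  unfolding set_lebesgue_integral_def using assms by (intro integral_nonneg_AE) (auto simp: indicator_def)

lemma Xnorm_powr:
  assumes "0 < p"
  shows "Xnorm p s u powr p = enn2real (gagliardo p s u)"
  using assms by (simp add: Xnorm_def powr_powr)

lemma gag_scale:
  fixes u :: "'a::euclidean_space \<Rightarrow> real"
  assumes u: "u \<in> borel_measurable lborel" and c: "0 < c"
  shows "gagliardo p s (\<lambda>x. c * u x) = ennreal (c powr p) * gagliardo p s u"
proof -
  have eq: "ennreal (\<bar>c * u (fst z) - c * u (snd z)\<bar> powr p / norm (fst z - snd z) powr (real DIM('a) + s * p))
     = ennreal (c powr p) * ennreal (\<bar>u (fst z) - u (snd z)\<bar> powr p / norm (fst z - snd z) powr (real DIM('a) + s * p))" for z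
  proof -
    have "\<bar>c * u (fst z) - c * u (snd z)\<bar> = c * \<bar>u (fst z) - u (snd z)\<bar>"
      using c by (simp add: right_diff_distrib[symmetric] abs_mult)
    then have "\<bar>c * u (fst z) - c * u (snd z)\<bar> powr p = c powr p * \<bar>u (fst z) - u (snd z)\<bar> powr p"
      using c by (simp add: powr_mult)
    then show ?thesis by (simp add: ennreal_mult[symmetric])
  qed
  have m: "(\<lambda>z. ennreal (\<bar>u (fst z) - u (snd z)\<bar> powr p / norm (fst z - snd z) powr (real DIM('a) + s * p)))
     \<in> borel_measurable (lborel \<Otimes>\<^sub>M lborel)"
    using u by measurable
  show ?thesis unfolding gagliardo_def eq using nn_integral_cmult[OF m] by simp
qed

lemma Xps_scale:
  assumes u: "u \<in> Xps \<Omega> p s" and c: "0 < c" and p: "0 < p"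
  shows "(\<lambda>x. c * u x) \<in> Xps \<Omega> p s"
proof -
  have ub: "u \<in> borel_measurable lborel" using u by (simp add: Xps_def)
  have "integrable lborel (\<lambda>x. c powr p * \<bar>u x\<bar> powr p)"
    using u by (intro integrable_mult_right) (simp add: Xps_def)
  moreover have "\<bar>c * u x\<bar> powr p = c powr p * \<bar>u x\<bar> powr p" for x
    using c by (simp add: abs_mult powr_mult)
  ultimately have i: "integrable lborel (\<lambda>x. \<bar>c * u x\<bar> powr p)" by simp
  have "gagliardo p s (\<lambda>x. c * u x) < \<infinity>"
    using u gag_scale[OF ub c, of p s] by (simp add: Xps_def ennreal_mult_less_top)
  then show ?thesis using u i by (auto simp: Xps_def)
qed

lemma Aop_scale:
  "Aop p s \<phi> (\<lambda>x. c * u x) = c * Aop p s \<phi> u"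
proof -
  have eqz: "\<bar>\<phi> (fst z) - \<phi> (snd z)\<bar> powr (p - 2) * (\<phi> (fst z) - \<phi> (snd z)) * (c * u (fst z) - c * u (snd z)) /
        norm (fst z - snd z) powr (real DIM('a) + s * p)
      = c * (\<bar>\<phi> (fst z) - \<phi> (snd z)\<bar> powr (p - 2) * (\<phi> (fst z) - \<phi> (snd z)) * (u (fst z) - u (snd z)) /
        norm (fst z - snd z) powr (real DIM('a) + s * p))" for z :: "'a::euclidean_space \<times> 'a"
    by (simp add: algebra_simps)
  show ?thesis unfolding Aop_def integral_mult_right_zero[symmetric]
    by (rule Bochner_Integration.integral_cong) (simp_all only: eqz)
qed

lemma Lpp_scale:
  assumes c: "0 < c"
  shows "Lpp \<Omega> p (\<lambda>x. c * u x) = c powr p * Lpp \<Omega> p u"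
proof -
  have "\<bar>c * u x\<bar> powr p = c powr p * \<bar>u x\<bar> powr p" for x
    using c by (simp add: abs_mult powr_mult)
  then show ?thesis unfolding Lpp_def by simp
qed

lemma lambda_star_bound:
  fixes \<Omega> :: "'a::euclidean_space set"
  assumes p: "0 < p" and ls: "0 < lambda_star \<Omega> p s \<phi>" and u: "u \<in> Wsp \<Omega> p s \<phi>"
  shows "Lpp \<Omega> p u \<le> Xnorm p s u powr p / lambda_star \<Omega> p s \<phi>"
proof -
  define L0 where "L0 = Lpp \<Omega> p u"
  have l0: "0 \<le> L0" unfolding L0_def Lpp_def by (intro set_int_nonneg) simp
  show ?thesis
  proof (cases "L0 = 0")
    case True then show ?thesis using ls by (simp add: L0_def)
  next
    case False
    then have lp: "0 < L0" using l0 by simp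
    define c where "c = L0 powr (-1/p)"
    have c: "0 < c" using lp by (simp add: c_def)
    have cp: "c powr p = 1 / L0"
    proof -
      have "c powr p = L0 powr ((-1/p) * p)" unfolding c_def powr_powr ..
      also have "(-1/p) * p = -1" using p by simp
      also have "L0 powr (-1) = 1 / L0" using lp by (simp add: powr_minus_divide)
      finally show ?thesis .
    qed
    have uX: "u \<in> Xps \<Omega> p s" and uA: "Aop p s \<phi> u = 0" using u by (auto simp: Wsp_def)
    have ub: "u \<in> borel_measurable lborel" using uX by (simp add: Xps_def)
    define v where "v = (\<lambda>x. c * u x)"
    have vW: "v \<in> Wsp \<Omega> p s \<phi>"
      using Xps_scale[OF uX c p] uA by (simp add: Wsp_def v_def Aop_scale)
    have vL: "Lpp \<Omega> p v = 1" using cp lp by (simp add: v_def Lpp_scale[OF c] L0_def)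
    have "lambda_star \<Omega> p s \<phi> \<le> Xnorm p s v powr p"
      unfolding lambda_star_def
    proof (rule cInf_lower)
      show "Xnorm p s v powr p \<in> {Xnorm p s u powr p |u. u \<in> Wsp \<Omega> p s \<phi> \<and> Lpp \<Omega> p u = 1}"
        using vW vL by blast
      show "bdd_below {Xnorm p s u powr p |u. u \<in> Wsp \<Omega> p s \<phi> \<and> Lpp \<Omega> p u = 1}"
        by (rule bdd_belowI[of _ 0]) auto
    qed
    also have "Xnorm p s v powr p = enn2real (gagliardo p s v)" using p by (rule Xnorm_powr)
    also have "\<dots> = c powr p * enn2real (gagliardo p s u)"
      unfolding v_def gag_scale[OF ub c] by (simp add: enn2real_mult)
    also have "\<dots> = Xnorm p s u powr p / L0" using cp Xnorm_powr[OF p, of s u] by simp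
    finally show ?thesis using lp ls by (simp add: field_simps L0_def)
  qed
qed



theorem proposition5p2:
  fixes \<Omega> :: "'a::euclidean_space set" and p s q lam a b :: real and \<phi>1 :: "'a \<Rightarrow> real"
  assumes "smooth_bounded_domain \<Omega>"
    and "0 < s" and "s < 1" and "1 < p" and "real DIM('a) > s * p"
    and "first_eigenfunction \<Omega> p s \<phi>1"
    and "lam > 0" and "b > 0" and "1 < q" and "q < p"
    and "lambda1 \<Omega> p s < a" and "a < lambda_star \<Omega> p s \<phi>1"
  shows "\<exists>\<alpha>>0. \<exists>\<rho>>0. \<forall>u\<in>Wsp \<Omega> p s \<phi>1. Xnorm p s u = \<rho> \<longrightarrow> Ifun \<Omega> p s q lam a b u \<ge> \<alpha>"
proof -
  note dom = assms(1) and s = assms(2,3) and p = assms(4) and sp = assms(5) and phi = assms(6)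
    and lam = assms(7) and b = assms(8) and q = assms(9,10) and a = assms(11,12)
  have Om: "\<Omega> \<in> sets lborel" "bounded \<Omega>" using dom by (auto simp: smooth_bounded_domain_def)
  define pst where "pst = crit_exp TYPE('a) p s"
  define r where "r = real DIM('a) / (real DIM('a) - s * p)"
  have pst: "pst = real DIM('a) * p / (real DIM('a) - s * p)" by (simp add: pst_def crit_exp_def)
  have pr: "pst = p * r" by (simp add: pst r_def)
  have r1: "1 < r" using sp s p by (simp add: r_def)
  have pstp: "p < pst" using pr r1 p by simp
  have pst0: "0 < pst" using pstp p by simp
  obtain K where K: "K \<ge> 0" and KK: "\<And>u. u \<in> Xps \<Omega> p s \<Longrightarrow>
     (\<integral>\<^sup>+ x. ennreal (max (u x) 0 powr pst) \<partial>lborel) \<le> ennreal ((K * enn2real (gagliardo p s u)) powr r)"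
    using sobolev_Xps[OF s(1) p sp Om] unfolding pst r_def by blast
  have l1: "0 \<le> lambda1 \<Omega> p s"
    unfolding lambda1_def
  proof (rule cInf_greatest)
    show "{Xnorm p s u powr p |u. u \<in> Xps \<Omega> p s \<and> Lpp \<Omega> p u = 1} \<noteq> {}"
      using phi by (auto simp: first_eigenfunction_def)
  qed auto
  have a0: "0 < a" using l1 a by simp
  have ls: "0 < lambda_star \<Omega> p s \<phi>1" using a0 a by simp
  define c0 where "c0 = (1 - a / lambda_star \<Omega> p s \<phi>1) / p"
  have c0: "0 < c0" using a ls p by (simp add: c0_def)
  define c1 where "c1 = b / pst * K powr r"
  have c1: "0 \<le> c1" using b pst0 K by (simp add: c1_def)
  define \<rho> where "\<rho> = (c0 / (2 * (c1 + 1))) powr (1 / (pst - p))"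
  have rho: "0 < \<rho>" using c0 c1 by (simp add: \<rho>_def)
  have rho2: "\<rho> powr (pst - p) = c0 / (2 * (c1 + 1))"
    using c0 c1 pstp by (simp add: \<rho>_def powr_powr)
  define \<alpha> where "\<alpha> = \<rho> powr p * c0 / 2"
  have alpha: "0 < \<alpha>" using rho c0 by (simp add: \<alpha>_def)
  have "\<forall>u\<in>Wsp \<Omega> p s \<phi>1. Xnorm p s u = \<rho> \<longrightarrow> Ifun \<Omega> p s q lam a b u \<ge> \<alpha>"
  proof (intro ballI impI)
    fix u assume uW: "u \<in> Wsp \<Omega> p s \<phi>1" and un: "Xnorm p s u = \<rho>"
    have uX: "u \<in> Xps \<Omega> p s" using uW by (simp add: Wsp_def)
    have G: "enn2real (gagliardo p s u) = \<rho> powr p" using Xnorm_powr[of p s u] p un by simp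
    have T1: "0 \<le> lam / q * (LINT x:\<Omega>|lborel. \<bar>u x\<bar> powr q)"
      using lam q by (intro mult_nonneg_nonneg set_int_nonneg) auto
    have T2: "a / p * Lpp \<Omega> p u \<le> a / p * (\<rho> powr p / lambda_star \<Omega> p s \<phi>1)"
      using lambda_star_bound[OF _ ls uW] p a0 un by (intro mult_left_mono) auto
    have T3: "(LINT x:\<Omega>|lborel. max (u x) 0 powr pst) \<le> K powr r * \<rho> powr pst"
    proof -
      have "(LINT x:\<Omega>|lborel. max (u x) 0 powr pst) \<le> (K * \<rho> powr p) powr r"
        unfolding set_lebesgue_integral_def
      proof (rule integral_real_bounded)
        show "0 \<le> (K * \<rho> powr p) powr r" by simp
        have "(\<integral>\<^sup>+ x. ennreal (indicator \<Omega> x *\<^sub>R max (u x) 0 powr pst) \<partial>lborel)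
            \<le> (\<integral>\<^sup>+ x. ennreal (max (u x) 0 powr pst) \<partial>lborel)"
          by (intro nn_integral_mono ennreal_leI) (auto simp: indicator_def)
        also have "\<dots> \<le> ennreal ((K * \<rho> powr p) powr r)" using KK[OF uX] G by simp
        finally show "(\<integral>\<^sup>+ x. ennreal (indicator \<Omega> x *\<^sub>R max (u x) 0 powr pst) \<partial>lborel) \<le> ennreal ((K * \<rho> powr p) powr r)" .
      qed
      also have "(K * \<rho> powr p) powr r = K powr r * \<rho> powr pst"
        using K rho by (simp add: powr_mult powr_powr pr)
      finally show ?thesis .
    qed
    have T3': "b / pst * (LINT x:\<Omega>|lborel. max (u x) 0 powr pst) \<le> c1 * \<rho> powr pst"
      using mult_left_mono[OF T3, of "b / pst"] b pst0 by (simp add: c1_def mult_ac)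
    have rp: "\<rho> powr pst = \<rho> powr p * \<rho> powr (pst - p)" using rho by (simp flip: powr_add)
    have "c1 * \<rho> powr pst \<le> \<rho> powr p * (c0 / 2)"
    proof -
      have "c1 * (c0 / (2 * (c1 + 1))) \<le> c0 / 2"
        using c0 c1 by (simp add: field_simps)
      then have "\<rho> powr p * (c1 * (c0 / (2 * (c1 + 1)))) \<le> \<rho> powr p * (c0 / 2)"
        by (intro mult_left_mono) auto
      then show ?thesis using rp rho2 by (simp add: mult_ac)
    qed
    have I4: "c1 * \<rho> powr pst \<le> \<rho> powr p * c0 / 2"
      using \<open>c1 * \<rho> powr pst \<le> \<rho> powr p * (c0 / 2)\<close> by simp
    have I1: "Ifun \<Omega> p s q lam a b u = \<rho> powr p / p + lam / q * (LINT x:\<Omega>|lborel. \<bar>u x\<bar> powr q)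
         - a / p * Lpp \<Omega> p u - b / pst * (LINT x:\<Omega>|lborel. max (u x) 0 powr pst)"
      by (simp add: Ifun_def Lpp_def pst_def un)
    have I2: "\<rho> powr p / p + lam / q * (LINT x:\<Omega>|lborel. \<bar>u x\<bar> powr q)
         - a / p * Lpp \<Omega> p u - b / pst * (LINT x:\<Omega>|lborel. max (u x) 0 powr pst) \<ge> \<rho> powr p / p - a / p * (\<rho> powr p / lambda_star \<Omega> p s \<phi>1) - c1 * \<rho> powr pst"
      using T1 T2 T3' by linarith
    have I3: "\<rho> powr p / p - a / p * (\<rho> powr p / lambda_star \<Omega> p s \<phi>1) = \<rho> powr p * c0"
      using p ls by (simp add: c0_def field_simps)
    show "Ifun \<Omega> p s q lam a b u \<ge> \<alpha>"
      unfolding \<alpha>_def using I1 I2 I3 I4 by linarith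
  qed
  then show ?thesis using alpha rho by blast
qed

end
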